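(* Consider the preference robust optimization problem $$\text{(PRO)}\qquad \max_{\bm z\in Z}\ \min_{\bm v\in\mathcal V}\ \frac1K\sum_{k=1}^K(\bm R\bm v)^\top\bm g(\bm z^\top\bm\xi^k),$$ i.e. $\max_{\bm z\in Z}\min_{u\in\mathcal U}\mathbb E[u(\bm z^\top\bm\xi)]$ where $\bm\xi$ takes the values $\bm\xi^k$ each with probability $1/K$ and $\mathcal U:=\{u(\cdot)=(\bm R\bm v)^\top\bm g(\cdot):\bm v\in\mathcal V\}$. For variables $\bm z\in Z$, $\bm\lambda\in\mathbb R^{N-1}$, $\bm\eta\in\mathbb R^M$, $\bm y^k\in\mathbb R^{N-1}$, $\bm w^k\in\{0,1\}^{N-1}$ ($k=1,\dots,K$), put $\bm s:=\frac1K\sum_{k=1}^K(\bm P\bm y^k+\bm Q\bm w^k)+\sum_{m=1}^M\eta_m h_m\bm\Delta^m\in\mathbb R^{N-1}$. Then the optimal value of (PRO) equals the optimal value of the mixed-integer linear program $$\max\ \{\bm s\}_{N-1}-\bm\lambda^\top\bm b$$ subject to $\{\bm s\}_{[N-2]}-\{\bm s\}_{N-1}\bm e+\bm A^\top\bm\lambda=\bm 0$; $x_jw^k_j-y^k_j\le0$, $x_{j+1}w^k_j-y^k_j\ge0$, $w^k_j\in\{0,1\}$ for $j=1,\dots,N-1$, $k=1,\dots,K$; $\sum_{j=1}^{N-1}w^k_j=1$ and $\sum_{j=1}^{N-1}y^k_j=\bm z^\top\bm\xi^k$ for $k=1,\dots,K$; $\bm z\in Z$, $\bm\lambda\ge\bm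 0$, $\bm\eta\ge\bm 0$.
   Context: Let $N\ge3$ be an integer and $\underline x=x_1<x_2<\cdots<x_N=\bar x$ real numbers; $\bm e$ denotes the all-ones vector of the appropriate dimension. Define $\bm g:[\underline x,\bar x]\to\mathbb R^{N-1}$ by $\bm g(x_1)=\bm 0$ and, for $x\in(x_i,x_{i+1}]$ ($i\in\{1,\dots,N-1\}$), $\bm g(x)=(1,\dots,1,\frac{x-x_i}{x_{i+1}-x_i},0,\dots,0)$ with the first $i-1$ entries equal to $1$, the $i$-th entry $\frac{x-x_i}{x_{i+1}-x_i}$ and the last $N-1-i$ entries $0$. For $\bm v\in\mathbb R^{N-2}$ let $\bm R\bm v:=(v_1,\dots,v_{N-2},1-\bm e^\top\bm v)\in\mathbb R^{N-1}$. For a vector $\bm a\in\mathbb R^{N-1}$, $\{\bm a\}_{N-1}$ denotes its last component and $\{\bm a\}_{[N-2]}$ the vector of its first $N-2$ components. Let $\bm P\in\mathbb R^{(N-1)\times(N-1)}$ be diagonal with entries $\bm P_{jj}=1/(x_{j+1}-x_j)$, and $\bm Q\in\mathbb R^{(N-1)\times(N-1)}$ upper triangular with $\bm Q_{jj}=-x_j/(x_{j+1}-x_j)$, $\bm Q_{jl}=1$ for $l>j$, and $\bm Q_{jl}=0$ for $l<j$. Let $\bm A\in\mathbb R^{(N-1)\times(N-2)}$ have first row $\bm e^\top$ and, for $j=2,\dots,N-1$, $j$-th row equal to minus the $(j-1)$-th standard unit vector of $\mathbb R^{N-2}$; let $\bm b=(1,0,\dots,0)\in\mathbb R^{N-1}$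 (so $\bm A\bm v\le\bm b$ means $\bm v\ge0$, $\bm e^\top\bm v\le1$). Let $M\ge1$ and, for $m=1,\dots,M$, let $r_1^m\le r_3^m$ and $r_2^m$ lie in $[\underline x,\bar x]$, $p^m\in[0,1]$, $h_m\in\{-1,1\}$, and put $\bm\Delta^m:=(1-p^m)\bm g(r_1^m)+p^m\bm g(r_3^m)-\bm g(r_2^m)$. Let $\mathcal V:=\{\bm v\in\mathbb R^{N-2}:\bm A\bm v\le\bm b,\ h_m(\bm R\bm v)^\top\bm\Delta^m\le0,\ m=1,\dots,M\}$. Let $Z\subset\mathbb R^n$ be compact and convex, and $\bm\xi^1,\dots,\bm\xi^K\in\mathbb R^n$ with $\bm z^\top\bm\xi^k\in[\underline x,\bar x]$ for all $\bm z\in Z$ and all $k$. *)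

theory Defs
  imports "HOL-Analysis.Analysis"
begin

text \<open>Conventions: vectors in R^(N-1) / R^(N-2) / R^M are functions nat => real,
  only the entries with indices 1..N-1 (resp. 1..N-2, 1..M) are meaningful.
  The breakpoints are xs 1 < ... < xs N.\<close>

definition gfun :: "nat \<Rightarrow> (nat \<Rightarrow> real) \<Rightarrow> real \<Rightarrow> nat \<Rightarrow> real" where
  "gfun N xs x j =
     (if x = xs 1 then 0
      else (let i = (THE i. 1 \<le> i \<and> i < N \<and> xs i < x \<and> x \<le> xs (Suc i)) in
            if j < i then 1
            else if j = i then (x - xs i) / (xs (Suc i) - xs i)
            else 0))"

definition Rmap :: "nat \<Rightarrow> (nat \<Rightarrow> real) \<Rightarrow> nat \<Rightarrow> real" where
  "Rmap N v j = (if j \<le> N - 2 then v j else 1 - (\<Sum>l=1..N-2. v l))"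

definition dotN :: "nat \<Rightarrow> (nat \<Rightarrow> real) \<Rightarrow> (nat \<Rightarrow> real) \<Rightarrow> real" where
  "dotN n a c = (\<Sum>j=1..n. a j * c j)"

definition Delta :: "nat \<Rightarrow> (nat \<Rightarrow> real) \<Rightarrow> real \<Rightarrow> real \<Rightarrow> real \<Rightarrow> real \<Rightarrow> nat \<Rightarrow> real" where
  "Delta N xs r1 r2 r3 p j =
     (1 - p) * gfun N xs r1 j + p * gfun N xs r3 j - gfun N xs r2 j"

definition Pmat :: "nat \<Rightarrow> (nat \<Rightarrow> real) \<Rightarrow> nat \<Rightarrow> nat \<Rightarrow> real" where
  "Pmat N xs j l = (if j = l then 1 / (xs (Suc j) - xs j) else 0)"

definition Qmat :: "nat \<Rightarrow> (nat \<Rightarrow> real) \<Rightarrow> nat \<Rightarrow> nat \<Rightarrow> real" where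
  "Qmat N xs j l = (if j = l then - xs j / (xs (Suc j) - xs j) else if l > j then 1 else 0)"

definition Amat :: "nat \<Rightarrow> nat \<Rightarrow> real" where
  "Amat j l = (if j = 1 then 1 else if l = j - 1 then -1 else 0)"

definition bvec :: "nat \<Rightarrow> real" where
  "bvec j = (if j = 1 then 1 else 0)"

definition mulv :: "nat \<Rightarrow> (nat \<Rightarrow> nat \<Rightarrow> real) \<Rightarrow> (nat \<Rightarrow> real) \<Rightarrow> nat \<Rightarrow> real" where
  "mulv n B a j = (\<Sum>l=1..n. B j l * a l)"

definition mulvT :: "nat \<Rightarrow> (nat \<Rightarrow> nat \<Rightarrow> real) \<Rightarrow> (nat \<Rightarrow> real) \<Rightarrow> nat \<Rightarrow> real" where
  "mulvT n B a l = (\<Sum>j=1..n. B j l * a j)"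

definition Vset :: "nat \<Rightarrow> (nat \<Rightarrow> real) \<Rightarrow> nat \<Rightarrow> (nat \<Rightarrow> real) \<Rightarrow> (nat \<Rightarrow> real) \<Rightarrow>
    (nat \<Rightarrow> real) \<Rightarrow> (nat \<Rightarrow> real) \<Rightarrow> (nat \<Rightarrow> real) \<Rightarrow> (nat \<Rightarrow> real) set" where
  "Vset N xs M r1 r2 r3 p h =
     {v. (\<forall>j\<in>{1..N-1}. mulv (N-2) Amat v j \<le> bvec j) \<and>
         (\<forall>m\<in>{1..M}. h m * dotN (N-1) (Rmap N v) (Delta N xs (r1 m) (r2 m) (r3 m) (p m)) \<le> 0)}"

definition PRO_value :: "nat \<Rightarrow> (nat \<Rightarrow> real) \<Rightarrow> nat \<Rightarrow> (nat \<Rightarrow> real) \<Rightarrow> (nat \<Rightarrow> real) \<Rightarrow>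
    (nat \<Rightarrow> real) \<Rightarrow> (nat \<Rightarrow> real) \<Rightarrow> (nat \<Rightarrow> real) \<Rightarrow> 'a::real_inner set \<Rightarrow> nat \<Rightarrow> (nat \<Rightarrow> 'a) \<Rightarrow> ereal" where
  "PRO_value N xs M r1 r2 r3 p h Z K \<xi> =
     (SUP z\<in>Z. INF v\<in>Vset N xs M r1 r2 r3 p h.
        ereal ((1 / real K) * (\<Sum>k=1..K. dotN (N-1) (Rmap N v) (gfun N xs (z \<bullet> \<xi> k)))))"

definition svec :: "nat \<Rightarrow> (nat \<Rightarrow> real) \<Rightarrow> nat \<Rightarrow> (nat \<Rightarrow> real) \<Rightarrow> (nat \<Rightarrow> real) \<Rightarrow>
    (nat \<Rightarrow> real) \<Rightarrow> (nat \<Rightarrow> real) \<Rightarrow> (nat \<Rightarrow> real) \<Rightarrow> nat \<Rightarrow>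
    (nat \<Rightarrow> real) \<Rightarrow> (nat \<Rightarrow> nat \<Rightarrow> real) \<Rightarrow> (nat \<Rightarrow> nat \<Rightarrow> real) \<Rightarrow> nat \<Rightarrow> real" where
  "svec N xs M r1 r2 r3 p h K \<eta> y w j =
     (1 / real K) * (\<Sum>k=1..K. mulv (N-1) (Pmat N xs) (y k) j + mulv (N-1) (Qmat N xs) (w k) j)
     + (\<Sum>m=1..M. \<eta> m * h m * Delta N xs (r1 m) (r2 m) (r3 m) (p m) j)"

definition MILP_feasible :: "nat \<Rightarrow> (nat \<Rightarrow> real) \<Rightarrow> nat \<Rightarrow> (nat \<Rightarrow> real) \<Rightarrow> (nat \<Rightarrow> real) \<Rightarrow>
    (nat \<Rightarrow> real) \<Rightarrow> (nat \<Rightarrow> real) \<Rightarrow> (nat \<Rightarrow> real) \<Rightarrow> 'a::real_inner set \<Rightarrow> nat \<Rightarrow> (nat \<Rightarrow> 'a) \<Rightarrow>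
    ('a \<times> (nat \<Rightarrow> real) \<times> (nat \<Rightarrow> real) \<times> (nat \<Rightarrow> nat \<Rightarrow> real) \<times> (nat \<Rightarrow> nat \<Rightarrow> real)) set" where
  "MILP_feasible N xs M r1 r2 r3 p h Z K \<xi> =
     {(z, lam, \<eta>, y, w).
        (let s = svec N xs M r1 r2 r3 p h K \<eta> y w in
          (\<forall>j\<in>{1..N-2}. s j - s (N-1) + mulvT (N-1) Amat lam j = 0)) \<and>
        (\<forall>k\<in>{1..K}. \<forall>j\<in>{1..N-1}.
            xs j * w k j - y k j \<le> 0 \<and> xs (Suc j) * w k j - y k j \<ge> 0 \<and> w k j \<in> {0, 1}) \<and>
        (\<forall>k\<in>{1..K}. (\<Sum>j=1..N-1. w k j) = 1 \<and> (\<Sum>j=1..N-1. y k j) = z \<bullet> \<xi> k) \<and>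
        z \<in> Z \<and> (\<forall>j\<in>{1..N-1}. lam j \<ge> 0) \<and> (\<forall>m\<in>{1..M}. \<eta> m \<ge> 0)}"

definition MILP_value :: "nat \<Rightarrow> (nat \<Rightarrow> real) \<Rightarrow> nat \<Rightarrow> (nat \<Rightarrow> real) \<Rightarrow> (nat \<Rightarrow> real) \<Rightarrow>
    (nat \<Rightarrow> real) \<Rightarrow> (nat \<Rightarrow> real) \<Rightarrow> (nat \<Rightarrow> real) \<Rightarrow> 'a::real_inner set \<Rightarrow> nat \<Rightarrow> (nat \<Rightarrow> 'a) \<Rightarrow> ereal" where
  "MILP_value N xs M r1 r2 r3 p h Z K \<xi> =
     (SUP (z, lam, \<eta>, y, w)\<in>MILP_feasible N xs M r1 r2 r3 p h Z K \<xi>.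
        ereal (svec N xs M r1 r2 r3 p h K \<eta> y w (N-1) - dotN (N-1) lam bvec))"

end

theory Submission
  imports Defs
begin


definition padd :: "((nat \<Rightarrow> real) \<times> real) \<Rightarrow> ((nat \<Rightarrow> real) \<times> real) \<Rightarrow> ((nat \<Rightarrow> real) \<times> real)" where
  "padd x y = ((\<lambda>j. fst x j + fst y j), snd x + snd y)"
definition pscale :: "real \<Rightarrow> ((nat \<Rightarrow> real) \<times> real) \<Rightarrow> ((nat \<Rightarrow> real) \<times> real)" where
  "pscale t x = ((\<lambda>j. t * fst x j), t * snd x)"

inductive_set ccone :: "((nat \<Rightarrow> real) \<times> real) set \<Rightarrow> ((nat \<Rightarrow> real) \<times> real) set"
  for C where
  cc_base: "c \<in> C \<Longrightarrow> c \<in> ccone C"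
| cc_zero: "((\<lambda>j. 0), 0) \<in> ccone C"
| cc_add: "x \<in> ccone C \<Longrightarrow> y \<in> ccone C \<Longrightarrow> padd x y \<in> ccone C"
| cc_scale: "x \<in> ccone C \<Longrightarrow> t \<ge> 0 \<Longrightarrow> pscale t x \<in> ccone C"

lemma ccone_sub: assumes "C' \<subseteq> ccone C" "x \<in> ccone C'" shows "x \<in> ccone C"
  using assms(2,1) by (induction x rule: ccone.induct) (auto intro: ccone.intros)

lemma ccone_coord0: assumes "\<forall>c\<in>C. fst c x = 0" "y \<in> ccone C" shows "fst y x = 0"
  using assms(2,1) by (induction y rule: ccone.induct) (auto simp: padd_def pscale_def)

lemma exists_between:
  fixes f g :: "'b \<Rightarrow> real"
  assumes "finite A" "finite B" "\<forall>a\<in>A. \<forall>b\<in>B. f a \<le> g b"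
  shows "\<exists>t. (\<forall>a\<in>A. f a \<le> t) \<and> (\<forall>b\<in>B. t \<le> g b)"
proof (cases "A = {}")
  case True
  show ?thesis
  proof (cases "B = {}")
    case True then show ?thesis using \<open>A = {}\<close> by auto
  next
    case False
    then show ?thesis using \<open>A = {}\<close> assms(2) by (intro exI[of _ "Min (g ` B)"]) auto
  qed
next
  case False
  then show ?thesis using assms by (intro exI[of _ "Max (f ` A)"]) (auto simp: Max_le_iff)
qed

definition feasJ :: "nat set \<Rightarrow> ((nat \<Rightarrow> real) \<times> real) set \<Rightarrow> (nat \<Rightarrow> real) \<Rightarrow> bool" where
  "feasJ J C v \<longleftrightarrow> (\<forall>c\<in>C. (\<Sum>j\<in>J. fst c j * v j) \<le> snd c)"

lemma fm_step:
  assumes "finite J" "x \<notin> J" "finite C"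
    and IH: "\<And>C. finite C \<Longrightarrow> \<not> (\<exists>v. feasJ J C v) \<Longrightarrow> \<exists>c\<in>ccone C. (\<forall>j\<in>J. fst c j = 0) \<and> snd c < 0"
    and inf: "\<not> (\<exists>v. feasJ (insert x J) C v)"
  shows "\<exists>c\<in>ccone C. (\<forall>j\<in>insert x J. fst c j = 0) \<and> snd c < 0"
proof -
  define C0 where "C0 = {c\<in>C. fst c x = 0}"
  define Cp where "Cp = {c\<in>C. fst c x > 0}"
  define Cn where "Cn = {c\<in>C. fst c x < 0}"
  define comb where "comb = (\<lambda>(p, n). padd (pscale (- fst n x) p) (pscale (fst p x) n))"
  define C' where "C' = C0 \<union> comb ` (Cp \<times> Cn)"
  have fin: "finite C'" using assms(3) unfolding C'_def C0_def Cp_def Cn_def by auto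
  have sub: "C' \<subseteq> ccone C"
  proof
    fix c assume "c \<in> C'"
    then show "c \<in> ccone C"
    proof (cases "c \<in> C0")
      case True then show ?thesis by (auto simp: C0_def intro: cc_base)
    next
      case False
      then obtain pp nn where "pp \<in> Cp" "nn \<in> Cn" "c = comb (pp, nn)" using \<open>c \<in> C'\<close> unfolding C'_def by auto
      then have "pp \<in> ccone C" "nn \<in> ccone C" "fst pp x > 0" "fst nn x < 0"
        unfolding Cp_def Cn_def by (auto intro: cc_base)
      then show ?thesis unfolding comb_def \<open>c = comb (pp, nn)\<close>
        by (auto intro!: cc_add cc_scale)
    qed
  qed
  have x0: "\<forall>c\<in>C'. fst c x = 0"
    unfolding C'_def C0_def comb_def by (auto simp: padd_def pscale_def)
  have "\<not> (\<exists>v. feasJ J C' v)"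
  proof
    assume "\<exists>v. feasJ J C' v"
    then obtain v where v: "feasJ J C' v" by blast
    define S where "S = (\<lambda>c::(nat \<Rightarrow> real) \<times> real. \<Sum>j\<in>J. fst c j * v j)"
    have pair: "(snd nn - S nn) / fst nn x \<le> (snd pp - S pp) / fst pp x" if "pp \<in> Cp" "nn \<in> Cn" for pp nn
    proof -
      have "comb (pp, nn) \<in> C'" using that unfolding C'_def by auto
      then have "S (comb (pp, nn)) \<le> snd (comb (pp, nn))" using v unfolding feasJ_def S_def by auto
      moreover have "S (comb (pp, nn)) = (- fst nn x) * S pp + fst pp x * S nn"
        unfolding S_def comb_def padd_def pscale_def
        by (simp add: sum.distrib sum_distrib_left algebra_simps sum_subtractf sum_negf)
      ultimately have h: "(- fst nn x) * S pp + fst pp x * S nn \<le> (- fst nn x) * snd pp + fst pp x * snd nn"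
        unfolding comb_def padd_def pscale_def by simp
      have a: "fst pp x > 0" "fst nn x < 0" using that unfolding Cp_def Cn_def by auto
      have "(snd nn - S nn) / fst nn x - (snd pp - S pp) / fst pp x
          = ((snd nn - S nn) * fst pp x - (snd pp - S pp) * fst nn x) / (fst nn x * fst pp x)"
        using a by (simp add: field_simps)
      also have "\<dots> \<le> 0"
      proof (rule divide_nonneg_neg)
        have "(snd nn - S nn) * fst pp x - (snd pp - S pp) * fst nn x
          = ((- fst nn x) * snd pp + fst pp x * snd nn) - ((- fst nn x) * S pp + fst pp x * S nn)"
          by (simp add: algebra_simps)
        then show "0 \<le> (snd nn - S nn) * fst pp x - (snd pp - S pp) * fst nn x" using h by linarith
        show "fst nn x * fst pp x < 0" using a by (simp add: mult_neg_pos)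
      qed
      finally show ?thesis by simp
    qed
    have "finite Cn" "finite Cp" using assms(3) unfolding Cp_def Cn_def by auto
    moreover have "\<forall>nn\<in>Cn. \<forall>pp\<in>Cp. (snd nn - S nn) / fst nn x \<le> (snd pp - S pp) / fst pp x"
      using pair by blast
    ultimately have "\<exists>t. (\<forall>nn\<in>Cn. (snd nn - S nn) / fst nn x \<le> t) \<and> (\<forall>pp\<in>Cp. t \<le> (snd pp - S pp) / fst pp x)"
      by (rule exists_between)
    then
    obtain t where t: "\<forall>nn\<in>Cn. (snd nn - S nn) / fst nn x \<le> t" "\<forall>pp\<in>Cp. t \<le> (snd pp - S pp) / fst pp x"
      by blast
    have "feasJ (insert x J) C (v(x := t))"
      unfolding feasJ_def
    proof
      fix c assume c: "c \<in> C"
      have eq: "(\<Sum>j\<in>insert x J. fst c j * (v(x := t)) j) = fst c x * t + S c"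
        unfolding S_def using assms(1,2) by (simp add: sum.insert) (intro sum.cong, auto)
      consider "fst c x = 0" | "fst c x > 0" | "fst c x < 0" by linarith
      then show "(\<Sum>j\<in>insert x J. fst c j * (v(x := t)) j) \<le> snd c"
      proof cases
        case 1
        then have "c \<in> C'" using c unfolding C'_def C0_def by auto
        then show ?thesis using v 1 unfolding eq feasJ_def S_def by auto
      next
        case 2
        then have "c \<in> Cp" using c unfolding Cp_def by auto
        then have "t \<le> (snd c - S c) / fst c x" using t by blast
        then have "fst c x * t \<le> snd c - S c" using 2 by (simp add: field_simps)
        then show ?thesis unfolding eq by simp
      next
        case 3
        then have "c \<in> Cn" using c unfolding Cn_def by auto
        then have "(snd c - S c) / fst c x \<le> t" using t by blast
        then have "fst c x * t \<le> snd c - S c" using 3 by (simp add: field_simps)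
        then show ?thesis unfolding eq by simp
      qed
    qed
    then show False using inf by blast
  qed
  from IH[OF fin this] obtain c where c: "c \<in> ccone C'" "\<forall>j\<in>J. fst c j = 0" "snd c < 0" by blast
  have "fst c x = 0" using ccone_coord0[OF x0 c(1)] .
  then show ?thesis using c ccone_sub[OF sub c(1)] by auto
qed

lemma fm:
  assumes "finite J"
  shows "finite C \<Longrightarrow> \<not> (\<exists>v. feasJ J C v) \<Longrightarrow> \<exists>c\<in>ccone C. (\<forall>j\<in>J. fst c j = 0) \<and> snd c < 0"
  using assms
proof (induction J arbitrary: C rule: finite_induct)
  case empty
  then obtain c where "c \<in> C" "\<not> 0 \<le> snd c" unfolding feasJ_def by auto
  then show ?case by (intro bexI[of _ c]) (auto intro: cc_base)
next
  case (insert x J)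
  show ?case by (rule fm_step) (use insert in auto)
qed

lemma sum_ind:
  fixes f :: "nat \<Rightarrow> real"
  assumes "finite I" "i \<in> I"
  shows "(\<Sum>j\<in>I. (if j = i then 1 else 0) * f j) = f i"
proof -
  have "(\<Sum>j\<in>I. (if j = i then 1 else 0) * f j) = (\<Sum>j\<in>I. if j = i then f j else 0)"
    by (rule sum.cong) auto
  also have "\<dots> = f i" using assms by (simp add: sum.delta')
  finally show ?thesis .
qed

lemma ccone_comb:
  fixes a1 a2 :: "nat \<Rightarrow> nat \<Rightarrow> real" and b1 b2 :: "nat \<Rightarrow> real"
  assumes "x \<in> ccone ((\<lambda>i. (a1 i, b1 i)) ` IA \<union> (\<lambda>i. (a2 i, b2 i)) ` IB \<union> {(d, e)})"
    "finite IA" "finite IB"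
  shows "\<exists>lam eta th. (\<forall>i\<in>IA. lam i \<ge> 0) \<and> (\<forall>i\<in>IB. eta i \<ge> 0) \<and> th \<ge> 0 \<and>
     (\<forall>l. fst x l = (\<Sum>i\<in>IA. lam i * a1 i l) + (\<Sum>i\<in>IB. eta i * a2 i l) + th * d l) \<and>
     snd x = (\<Sum>i\<in>IA. lam i * b1 i) + (\<Sum>i\<in>IB. eta i * b2 i) + th * e"
  using assms(1)
proof (induction x rule: ccone.induct)
  case (cc_base c)
  then consider i where "i \<in> IA" "c = (a1 i, b1 i)" | i where "i \<in> IB" "c = (a2 i, b2 i)" | "c = (d, e)"
    by blast
  then show ?case
  proof cases
    case 1
    show ?thesis
      by (rule exI[of _ "\<lambda>j. if j = i then 1 else 0"], rule exI[of _ "\<lambda>_. 0"], rule exI[of _ 0])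
        (use 1 assms(2) in \<open>auto simp: sum_ind\<close>)
  next
    case 2
    show ?thesis
      by (rule exI[of _ "\<lambda>_. 0"], rule exI[of _ "\<lambda>j. if j = i then 1 else 0"], rule exI[of _ 0])
        (use 2 assms(3) in \<open>auto simp: sum_ind\<close>)
  next
    case 3
    show ?thesis
      by (rule exI[of _ "\<lambda>_. 0"], rule exI[of _ "\<lambda>_. 0"], rule exI[of _ 1]) (use 3 in auto)
  qed
next
  case cc_zero
  show ?case
    by (rule exI[of _ "\<lambda>_. 0"], rule exI[of _ "\<lambda>_. 0"], rule exI[of _ 0]) auto
next
  case (cc_add x y)
  from cc_add.IH(1) obtain lam eta th where A: "(\<forall>i\<in>IA. lam i \<ge> 0) \<and> (\<forall>i\<in>IB. eta i \<ge> 0) \<and> th \<ge> 0 \<and>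
     (\<forall>l. fst x l = (\<Sum>i\<in>IA. lam i * a1 i l) + (\<Sum>i\<in>IB. eta i * a2 i l) + th * d l) \<and>
     snd x = (\<Sum>i\<in>IA. lam i * b1 i) + (\<Sum>i\<in>IB. eta i * b2 i) + th * e" by blast
  from cc_add.IH(2) obtain lam' eta' th' where B: "(\<forall>i\<in>IA. lam' i \<ge> 0) \<and> (\<forall>i\<in>IB. eta' i \<ge> 0) \<and> th' \<ge> 0 \<and>
     (\<forall>l. fst y l = (\<Sum>i\<in>IA. lam' i * a1 i l) + (\<Sum>i\<in>IB. eta' i * a2 i l) + th' * d l) \<and>
     snd y = (\<Sum>i\<in>IA. lam' i * b1 i) + (\<Sum>i\<in>IB. eta' i * b2 i) + th' * e" by blast
  show ?case
    by (rule exI[of _ "\<lambda>i. lam i + lam' i"], rule exI[of _ "\<lambda>i. eta i + eta' i"], rule exI[of _ "th + th'"])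
      (use A B in \<open>auto simp: padd_def algebra_simps sum.distrib\<close>)
next
  case (cc_scale x t)
  from cc_scale.IH obtain lam eta th where A: "(\<forall>i\<in>IA. lam i \<ge> 0) \<and> (\<forall>i\<in>IB. eta i \<ge> 0) \<and> th \<ge> 0 \<and>
     (\<forall>l. fst x l = (\<Sum>i\<in>IA. lam i * a1 i l) + (\<Sum>i\<in>IB. eta i * a2 i l) + th * d l) \<and>
     snd x = (\<Sum>i\<in>IA. lam i * b1 i) + (\<Sum>i\<in>IB. eta i * b2 i) + th * e" by blast
  show ?case
    by (rule exI[of _ "\<lambda>i. t * lam i"], rule exI[of _ "\<lambda>i. t * eta i"], rule exI[of _ "t * th"])
      (use A cc_scale.hyps(2) in \<open>auto simp: pscale_def algebra_simps sum_distrib_left\<close>)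
qed

lemma sum_swap_lin:
  fixes lam :: "nat \<Rightarrow> real" and a :: "nat \<Rightarrow> nat \<Rightarrow> real"
  assumes "finite I" "finite J"
  shows "(\<Sum>l\<in>J. (\<Sum>i\<in>I. lam i * a i l) * v l) = (\<Sum>i\<in>I. lam i * (\<Sum>l\<in>J. a i l * v l))"
  by (simp add: sum_distrib_left sum_distrib_right mult.assoc sum.swap[of _ J I])

lemma lp_weak:
  fixes a1 a2 :: "nat \<Rightarrow> nat \<Rightarrow> real" and b1 b2 d lam eta v :: "nat \<Rightarrow> real"
  assumes fin: "finite J" "finite IA" "finite IB"
    and pos: "\<forall>i\<in>IA. lam i \<ge> 0" "\<forall>i\<in>IB. eta i \<ge> 0"
    and dual: "\<forall>l\<in>J. d l + (\<Sum>i\<in>IA. lam i * a1 i l) + (\<Sum>i\<in>IB. eta i * a2 i l) = 0"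
    and prim: "\<forall>i\<in>IA. (\<Sum>l\<in>J. a1 i l * v l) \<le> b1 i" "\<forall>i\<in>IB. (\<Sum>l\<in>J. a2 i l * v l) \<le> b2 i"
  shows "c0 - (\<Sum>i\<in>IA. lam i * b1 i) - (\<Sum>i\<in>IB. eta i * b2 i) \<le> c0 + (\<Sum>l\<in>J. d l * v l)"
proof -
  have "(\<Sum>l\<in>J. d l * v l) = (\<Sum>l\<in>J. (- (\<Sum>i\<in>IA. lam i * a1 i l)) * v l + (- (\<Sum>i\<in>IB. eta i * a2 i l)) * v l)"
  proof (rule sum.cong)
    fix l assume "l \<in> J"
    then have eq: "d l = - (\<Sum>i\<in>IA. lam i * a1 i l) - (\<Sum>i\<in>IB. eta i * a2 i l)" using dual by (auto simp: algebra_simps)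
    show "d l * v l = (- (\<Sum>i\<in>IA. lam i * a1 i l)) * v l + (- (\<Sum>i\<in>IB. eta i * a2 i l)) * v l"
      unfolding eq by (simp add: algebra_simps)
  qed simp
  also have "\<dots> = - (\<Sum>i\<in>IA. lam i * (\<Sum>l\<in>J. a1 i l * v l)) - (\<Sum>i\<in>IB. eta i * (\<Sum>l\<in>J. a2 i l * v l))"
    using sum_swap_lin[OF fin(2,1), of lam a1 v] sum_swap_lin[OF fin(3,1), of eta a2 v]
    by (simp add: sum.distrib sum_negf sum_subtractf)
  finally have e: "(\<Sum>l\<in>J. d l * v l) = - (\<Sum>i\<in>IA. lam i * (\<Sum>l\<in>J. a1 i l * v l)) - (\<Sum>i\<in>IB. eta i * (\<Sum>l\<in>J. a2 i l * v l))" .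
  have "(\<Sum>i\<in>IA. lam i * (\<Sum>l\<in>J. a1 i l * v l)) \<le> (\<Sum>i\<in>IA. lam i * b1 i)"
    using pos prim by (intro sum_mono mult_left_mono) auto
  moreover have "(\<Sum>i\<in>IB. eta i * (\<Sum>l\<in>J. a2 i l * v l)) \<le> (\<Sum>i\<in>IB. eta i * b2 i)"
    using pos prim by (intro sum_mono mult_left_mono) auto
  ultimately show ?thesis unfolding e by linarith
qed

lemma lp_strong:
  fixes a1 a2 :: "nat \<Rightarrow> nat \<Rightarrow> real" and b1 b2 d lamz etaz :: "nat \<Rightarrow> real"
  assumes fin: "finite J" "finite IA" "finite IB"
    and pos0: "\<forall>i\<in>IA. lamz i \<ge> 0" "\<forall>i\<in>IB. etaz i \<ge> 0"
    and dual0: "\<forall>l\<in>J. d l + (\<Sum>i\<in>IA. lamz i * a1 i l) + (\<Sum>i\<in>IB. etaz i * a2 i l) = 0"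
    and prim: "\<And>v. \<forall>i\<in>IA. (\<Sum>l\<in>J. a1 i l * v l) \<le> b1 i \<Longrightarrow> \<forall>i\<in>IB. (\<Sum>l\<in>J. a2 i l * v l) \<le> b2 i
        \<Longrightarrow> t < c0 + (\<Sum>l\<in>J. d l * v l)"
  shows "\<exists>lam eta. (\<forall>i\<in>IA. lam i \<ge> 0) \<and> (\<forall>i\<in>IB. eta i \<ge> 0) \<and>
     (\<forall>l\<in>J. d l + (\<Sum>i\<in>IA. lam i * a1 i l) + (\<Sum>i\<in>IB. eta i * a2 i l) = 0) \<and>
     t < c0 - (\<Sum>i\<in>IA. lam i * b1 i) - (\<Sum>i\<in>IB. eta i * b2 i)"
proof -
  define C where "C = (\<lambda>i. (a1 i, b1 i)) ` IA \<union> (\<lambda>i. (a2 i, b2 i)) ` IB \<union> {(d, t - c0)}"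
  have finC: "finite C" using fin unfolding C_def by auto
  have "\<not> (\<exists>v. feasJ J C v)"
  proof
    assume "\<exists>v. feasJ J C v"
    then obtain v where v: "feasJ J C v" by blast
    have vC: "\<And>c. c \<in> C \<Longrightarrow> (\<Sum>j\<in>J. fst c j * v j) \<le> snd c" using v unfolding feasJ_def by auto
    have "\<forall>i\<in>IA. (\<Sum>l\<in>J. a1 i l * v l) \<le> b1 i"
    proof
      fix i assume "i \<in> IA" then have "(a1 i, b1 i) \<in> C" unfolding C_def by auto
      from vC[OF this] show "(\<Sum>l\<in>J. a1 i l * v l) \<le> b1 i" by simp
    qed
    moreover have "\<forall>i\<in>IB. (\<Sum>l\<in>J. a2 i l * v l) \<le> b2 i"
    proof
      fix i assume "i \<in> IB" then have "(a2 i, b2 i) \<in> C" unfolding C_def by auto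
      from vC[OF this] show "(\<Sum>l\<in>J. a2 i l * v l) \<le> b2 i" by simp
    qed
    moreover have "(\<Sum>l\<in>J. d l * v l) \<le> t - c0" using vC[of "(d, t - c0)"] unfolding C_def by simp
    ultimately show False using prim[of v] by linarith
  qed
  from fm[OF fin(1) finC this] obtain c where c: "c \<in> ccone C" "\<forall>j\<in>J. fst c j = 0" "snd c < 0" by blast
  from ccone_comb[OF c(1)[unfolded C_def] fin(2,3)] obtain lam eta th where
    lt: "\<forall>i\<in>IA. lam i \<ge> 0" "\<forall>i\<in>IB. eta i \<ge> 0" "th \<ge> 0"
    "\<forall>l. fst c l = (\<Sum>i\<in>IA. lam i * a1 i l) + (\<Sum>i\<in>IB. eta i * a2 i l) + th * d l"
    "snd c = (\<Sum>i\<in>IA. lam i * b1 i) + (\<Sum>i\<in>IB. eta i * b2 i) + th * (t - c0)" by blast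
  have Z: "\<forall>l\<in>J. (\<Sum>i\<in>IA. lam i * a1 i l) + (\<Sum>i\<in>IB. eta i * a2 i l) + th * d l = 0"
    using c(2) lt(4) by auto
  have N: "(\<Sum>i\<in>IA. lam i * b1 i) + (\<Sum>i\<in>IB. eta i * b2 i) + th * (t - c0) < 0"
    using c(3) lt(5) by auto
  show ?thesis
  proof (cases "th > 0")
    case True
    define lam' where "lam' = (\<lambda>i. lam i / th)"
    define eta' where "eta' = (\<lambda>i. eta i / th)"
    have s1: "(\<Sum>i\<in>IA. lam' i * f i) = (\<Sum>i\<in>IA. lam i * f i) / th" for f
      unfolding lam'_def by (simp add: sum_divide_distrib)
    have s2: "(\<Sum>i\<in>IB. eta' i * f i) = (\<Sum>i\<in>IB. eta i * f i) / th" for f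
      unfolding eta'_def by (simp add: sum_divide_distrib)
    show ?thesis
    proof (intro exI conjI ballI)
      show "lam' i \<ge> 0" if "i \<in> IA" for i using lt(1) that True unfolding lam'_def by auto
      show "eta' i \<ge> 0" if "i \<in> IB" for i using lt(2) that True unfolding eta'_def by auto
      show "d l + (\<Sum>i\<in>IA. lam' i * a1 i l) + (\<Sum>i\<in>IB. eta' i * a2 i l) = 0" if "l \<in> J" for l
      proof -
        have "(\<Sum>i\<in>IA. lam i * a1 i l) + (\<Sum>i\<in>IB. eta i * a2 i l) + th * d l = 0" using Z that by auto
        then show ?thesis using True unfolding s1 s2 by (simp add: field_simps)
      qed
      show "t < c0 - (\<Sum>i\<in>IA. lam' i * b1 i) - (\<Sum>i\<in>IB. eta' i * b2 i)"
      proof -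
        define X where "X = (\<Sum>i\<in>IA. lam i * b1 i) + (\<Sum>i\<in>IB. eta i * b2 i)"
        have "X + th * (t - c0) < 0" using N unfolding X_def .
        then have a: "(X + th * (t - c0)) / th < 0" using True by (rule divide_neg_pos)
        have b: "(X + th * (t - c0)) / th = X / th + (t - c0)" using True by (simp add: add_divide_distrib)
        have c: "X / th = (\<Sum>i\<in>IA. lam i * b1 i) / th + (\<Sum>i\<in>IB. eta i * b2 i) / th"
          unfolding X_def by (simp add: add_divide_distrib)
        from a b c have "t < c0 - (\<Sum>i\<in>IA. lam i * b1 i) / th - (\<Sum>i\<in>IB. eta i * b2 i) / th" by linarith
        then show ?thesis unfolding s1 s2 .
      qed
    qed
  next
    case False
    then have th0: "th = 0" using lt(3) by auto
    define del where "del = - ((\<Sum>i\<in>IA. lam i * b1 i) + (\<Sum>i\<in>IB. eta i * b2 i))"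
    have del: "del > 0" using N th0 unfolding del_def by auto
    define ob0 where "ob0 = c0 - (\<Sum>i\<in>IA. lamz i * b1 i) - (\<Sum>i\<in>IB. etaz i * b2 i)"
    define R where "R = max 0 ((t - ob0) / del) + 1"
    have R: "R \<ge> 0" "R * del > t - ob0"
    proof -
      show "R \<ge> 0" unfolding R_def by auto
      have "R > (t - ob0) / del" unfolding R_def by auto
      then show "R * del > t - ob0" using del by (simp add: field_simps)
    qed
    define lam' where "lam' = (\<lambda>i. lamz i + R * lam i)"
    define eta' where "eta' = (\<lambda>i. etaz i + R * eta i)"
    have s1: "(\<Sum>i\<in>IA. lam' i * f i) = (\<Sum>i\<in>IA. lamz i * f i) + R * (\<Sum>i\<in>IA. lam i * f i)" for f
      unfolding lam'_def by (simp add: sum.distrib sum_distrib_left algebra_simps)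
    have s2: "(\<Sum>i\<in>IB. eta' i * f i) = (\<Sum>i\<in>IB. etaz i * f i) + R * (\<Sum>i\<in>IB. eta i * f i)" for f
      unfolding eta'_def by (simp add: sum.distrib sum_distrib_left algebra_simps)
    show ?thesis
    proof (intro exI conjI ballI)
      show "lam' i \<ge> 0" if "i \<in> IA" for i using lt(1) pos0 that R unfolding lam'_def by auto
      show "eta' i \<ge> 0" if "i \<in> IB" for i using lt(2) pos0 that R unfolding eta'_def by auto
      show "d l + (\<Sum>i\<in>IA. lam' i * a1 i l) + (\<Sum>i\<in>IB. eta' i * a2 i l) = 0" if "l \<in> J" for l
      proof -
        have "(\<Sum>i\<in>IA. lam i * a1 i l) + (\<Sum>i\<in>IB. eta i * a2 i l) = 0" using Z that th0 by auto
        moreover have "d l + (\<Sum>i\<in>IA. lamz i * a1 i l) + (\<Sum>i\<in>IB. etaz i * a2 i l) = 0" using dual0 that by auto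
        moreover have "d l + ((\<Sum>i\<in>IA. lamz i * a1 i l) + R * (\<Sum>i\<in>IA. lam i * a1 i l)) + ((\<Sum>i\<in>IB. etaz i * a2 i l) + R * (\<Sum>i\<in>IB. eta i * a2 i l))
          = (d l + (\<Sum>i\<in>IA. lamz i * a1 i l) + (\<Sum>i\<in>IB. etaz i * a2 i l)) + R * ((\<Sum>i\<in>IA. lam i * a1 i l) + (\<Sum>i\<in>IB. eta i * a2 i l))"
          by (simp add: algebra_simps)
        ultimately show ?thesis unfolding s1 s2 by simp
      qed
      show "t < c0 - (\<Sum>i\<in>IA. lam' i * b1 i) - (\<Sum>i\<in>IB. eta' i * b2 i)"
      proof -
        have "c0 - (\<Sum>i\<in>IA. lam' i * b1 i) - (\<Sum>i\<in>IB. eta' i * b2 i) = ob0 + R * del"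
          unfolding s1 s2 ob0_def del_def by (simp add: algebra_simps)
        then show ?thesis using R by linarith
      qed
    qed
  qed
qed



lemma xs_mono_lt:
  assumes mono: "\<And>i. 1 \<le> i \<Longrightarrow> i < N \<Longrightarrow> xs i < xs (Suc i)"
  shows "1 \<le> i \<Longrightarrow> i < k \<Longrightarrow> k \<le> N \<Longrightarrow> xs i < (xs k :: real)"
proof (induction k)
  case 0 then show ?case by simp
next
  case (Suc k)
  show ?case
  proof (cases "i = k")
    case True then show ?thesis using mono Suc.prems by auto
  next
    case False
    then have "xs i < xs k" using Suc by auto
    also have "xs k < xs (Suc k)" using mono Suc.prems False by auto
    finally show ?thesis .
  qed
qed

lemma xs_mono_le:
  assumes mono: "\<And>i. 1 \<le> i \<Longrightarrow> i < N \<Longrightarrow> xs i < xs (Suc i)"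
  shows "1 \<le> i \<Longrightarrow> i \<le> k \<Longrightarrow> k \<le> N \<Longrightarrow> xs i \<le> (xs k :: real)"
  using xs_mono_lt[where N=N and xs=xs, OF mono, of i k] by (cases "i = k") auto

definition segf :: "(nat \<Rightarrow> real) \<Rightarrow> nat \<Rightarrow> real \<Rightarrow> nat \<Rightarrow> real" where
  "segf xs i t j = (if j < i then 1 else if j = i then (t - xs i) / (xs (Suc i) - xs i) else 0)"

lemma seg_unique:
  fixes xs :: "nat \<Rightarrow> real"
  assumes mono: "\<And>i. 1 \<le> i \<Longrightarrow> i < N \<Longrightarrow> xs i < xs (Suc i)"
    and a: "1 \<le> a \<and> a < N \<and> xs a < t \<and> t \<le> xs (Suc a)"
    and b: "1 \<le> b \<and> b < N \<and> xs b < t \<and> t \<le> xs (Suc b)"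
  shows "a = b"
proof (rule ccontr)
  assume "a \<noteq> b"
  then consider "a < b" | "b < a" by linarith
  then show False
  proof cases
    case 1
    then have "xs (Suc a) \<le> xs b" using xs_mono_le[where N=N and xs=xs, OF mono, of "Suc a" b] a b by auto
    then show False using a b by auto
  next
    case 2
    then have "xs (Suc b) \<le> xs a" using xs_mono_le[where N=N and xs=xs, OF mono, of "Suc b" a] a b by auto
    then show False using a b by auto
  qed
qed

lemma gfun_seg:
  fixes xs :: "nat \<Rightarrow> real"
  assumes mono: "\<And>i. 1 \<le> i \<Longrightarrow> i < N \<Longrightarrow> xs i < xs (Suc i)"
    and i: "1 \<le> i" "i < N" and t: "xs i \<le> t" "t \<le> xs (Suc i)" and j: "1 \<le> j"
  shows "gfun N xs t j = segf xs i t j"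
proof (cases "t = xs 1")
  case True
  have "i = 1"
  proof (rule ccontr)
    assume "i \<noteq> 1"
    then have "xs 1 < xs i" using xs_mono_lt[where N=N and xs=xs, OF mono, of 1 i] i by auto
    then show False using t True by auto
  qed
  then show ?thesis using True j unfolding gfun_def segf_def by auto
next
  case False
  show ?thesis
  proof (cases "xs i < t")
    case True
    have "(THE i. 1 \<le> i \<and> i < N \<and> xs i < t \<and> t \<le> xs (Suc i)) = i"
      by (rule the_equality) (use True i t seg_unique[where N=N and xs=xs, OF mono] in blast)+
    then show ?thesis using False unfolding gfun_def segf_def Let_def by simp
  next
    case le: False
    then have ti: "t = xs i" using t by auto
    have i2: "i \<ge> 2" using ti False i by (cases "i = 1") auto
    have P: "1 \<le> i - 1 \<and> i - 1 < N \<and> xs (i - 1) < t \<and> t \<le> xs (Suc (i - 1))"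
      using i2 i ti xs_mono_lt[where N=N and xs=xs, OF mono, of "i - 1" i] by auto
    have "(THE i. 1 \<le> i \<and> i < N \<and> xs i < t \<and> t \<le> xs (Suc i)) = i - 1"
      by (rule the_equality) (use P seg_unique[where N=N and xs=xs, OF mono] in blast)+
    moreover have "xs (Suc (i - 1)) = xs i" using i2 by (simp add: Suc_diff_Suc numeral_2_eq_2)
    moreover have "xs (i - 1) < xs i" using P ti by simp
    ultimately show ?thesis using False i2 ti unfolding gfun_def segf_def Let_def by auto
  qed
qed

lemma seg_exists:
  fixes xs :: "nat \<Rightarrow> real"
  assumes mono: "\<And>i. 1 \<le> i \<Longrightarrow> i < N \<Longrightarrow> xs i < xs (Suc i)" and N: "N \<ge> 2"
    and t: "xs 1 \<le> t" "t \<le> xs N"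
  shows "\<exists>i. 1 \<le> i \<and> i < N \<and> xs i \<le> t \<and> t \<le> xs (Suc i)"
proof -
  define S where "S = {i\<in>{1..N-1}. xs i \<le> t}"
  have "1 \<in> S" using t N unfolding S_def by auto
  have fS: "finite S" unfolding S_def by auto
  define i where "i = Max S"
  have iS: "i \<in> S" using fS \<open>1 \<in> S\<close> unfolding i_def by (intro Max_in) auto
  have imax: "k \<in> S \<Longrightarrow> k \<le> i" for k using fS unfolding i_def by auto
  have "t \<le> xs (Suc i)"
  proof (cases "Suc i \<le> N - 1")
    case True
    then have "Suc i \<notin> S" using imax by fastforce
    then show ?thesis using True unfolding S_def by auto
  next
    case False
    then have "Suc i = N" using iS N unfolding S_def by auto
    then show ?thesis using t by simp
  qed
  then show ?thesis using iS N unfolding S_def by (intro exI[of _ i]) auto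
qed



lemma dot_Rmap:
  assumes "N \<ge> 3"
  shows "dotN (N-1) (Rmap N v) D = D (N-1) + (\<Sum>l=1..N-2. (D l - D (N-1)) * v l)"
proof -
  have S: "{1..N-1} = insert (N-1) {1..N-2}" using assms by auto
  have R1: "(\<Sum>l=1..N-2. Rmap N v l * D l) = (\<Sum>l=1..N-2. v l * D l)"
    by (rule sum.cong) (auto simp: Rmap_def)
  have R2: "Rmap N v (N-1) = 1 - (\<Sum>l=1..N-2. v l)" using assms by (simp add: Rmap_def)
  have "dotN (N-1) (Rmap N v) D = Rmap N v (N-1) * D (N-1) + (\<Sum>l=1..N-2. Rmap N v l * D l)"
    unfolding dotN_def S by (subst sum.insert) auto
  also have "\<dots> = D (N-1) + (\<Sum>l=1..N-2. (D l - D (N-1)) * v l)"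
    unfolding R1 R2 by (simp add: algebra_simps sum_subtractf sum_distrib_left sum_distrib_right)
  finally show ?thesis .
qed

definition DD :: "nat \<Rightarrow> (nat \<Rightarrow> real) \<Rightarrow> (nat \<Rightarrow> real) \<Rightarrow> (nat \<Rightarrow> real) \<Rightarrow> (nat \<Rightarrow> real) \<Rightarrow> (nat \<Rightarrow> real) \<Rightarrow> nat \<Rightarrow> nat \<Rightarrow> real" where
  "DD N xs r1 r2 r3 p m = Delta N xs (r1 m) (r2 m) (r3 m) (p m)"
definition aD where "aD N xs r1 r2 r3 p h m l = h m * (DD N xs r1 r2 r3 p m l - DD N xs r1 r2 r3 p m (N-1))"
definition bD where "bD N xs r1 r2 r3 p h m = - (h m * DD N xs r1 r2 r3 p m (N-1))"

lemma Vset_iff: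
  assumes "N \<ge> 3"
  shows "v \<in> Vset N xs M r1 r2 r3 p h \<longleftrightarrow>
    (\<forall>i\<in>{1..N-1}. (\<Sum>l\<in>{1..N-2}. Amat i l * v l) \<le> bvec i) \<and>
    (\<forall>m\<in>{1..M}. (\<Sum>l\<in>{1..N-2}. aD N xs r1 r2 r3 p h m l * v l) \<le> bD N xs r1 r2 r3 p h m)"
proof -
  have "h m * dotN (N-1) (Rmap N v) (Delta N xs (r1 m) (r2 m) (r3 m) (p m)) \<le> 0 \<longleftrightarrow>
     (\<Sum>l\<in>{1..N-2}. aD N xs r1 r2 r3 p h m l * v l) \<le> bD N xs r1 r2 r3 p h m" for m
  proof -
    have "h m * dotN (N-1) (Rmap N v) (Delta N xs (r1 m) (r2 m) (r3 m) (p m))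
      = h m * DD N xs r1 r2 r3 p m (N-1) + (\<Sum>l\<in>{1..N-2}. aD N xs r1 r2 r3 p h m l * v l)"
      unfolding dot_Rmap[OF assms] aD_def DD_def by (simp add: algebra_simps sum_distrib_left)
    then show ?thesis unfolding bD_def by linarith
  qed
  then show ?thesis unfolding Vset_def mulv_def by auto
qed

lemma dot_lin:
  "dotN n a (\<lambda>j. c * (\<Sum>k\<in>Ks. f k j)) = c * (\<Sum>k\<in>Ks. dotN n a (f k))"
proof -
  have "dotN n a (\<lambda>j. c * (\<Sum>k\<in>Ks. f k j)) = (\<Sum>j=1..n. \<Sum>k\<in>Ks. c * (a j * f k j))"
    unfolding dotN_def by (simp add: sum_distrib_left mult_ac)
  also have "\<dots> = (\<Sum>k\<in>Ks. \<Sum>j=1..n. c * (a j * f k j))" by (rule sum.swap)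
  also have "\<dots> = c * (\<Sum>k\<in>Ks. dotN n a (f k))" unfolding dotN_def by (simp add: sum_distrib_left)
  finally show ?thesis .
qed

definition GG :: "nat \<Rightarrow> (nat \<Rightarrow> real) \<Rightarrow> nat \<Rightarrow> (nat \<Rightarrow> 'a::real_inner) \<Rightarrow> 'a \<Rightarrow> nat \<Rightarrow> real" where
  "GG N xs K \<xi> z j = (1 / real K) * (\<Sum>k=1..K. gfun N xs (z \<bullet> \<xi> k) j)"

lemma F_eq:
  assumes "N \<ge> 3"
  shows "(1 / real K) * (\<Sum>k=1..K. dotN (N-1) (Rmap N v) (gfun N xs (z \<bullet> \<xi> k)))
     = GG N xs K \<xi> z (N-1) + (\<Sum>l\<in>{1..N-2}. (GG N xs K \<xi> z l - GG N xs K \<xi> z (N-1)) * v l)"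
proof -
  have "(1 / real K) * (\<Sum>k=1..K. dotN (N-1) (Rmap N v) (gfun N xs (z \<bullet> \<xi> k))) = dotN (N-1) (Rmap N v) (GG N xs K \<xi> z)"
    unfolding GG_def by (rule dot_lin[symmetric])
  then show ?thesis using dot_Rmap[OF assms] by simp
qed

definition YW :: "nat \<Rightarrow> (nat \<Rightarrow> real) \<Rightarrow> (nat \<Rightarrow> real) \<Rightarrow> (nat \<Rightarrow> real) \<Rightarrow> real \<Rightarrow> bool" where
  "YW N xs y w t \<longleftrightarrow> (\<forall>j\<in>{1..N-1}. xs j * w j - y j \<le> 0 \<and> xs (Suc j) * w j - y j \<ge> 0 \<and> w j \<in> {0, 1}) \<and>
     (\<Sum>j=1..N-1. w j) = 1 \<and> (\<Sum>j=1..N-1. y j) = t"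

lemma sum_single:
  fixes f :: "nat \<Rightarrow> real"
  assumes "finite S" "i \<in> S" "\<forall>l\<in>S. l \<noteq> i \<longrightarrow> y l = 0"
  shows "(\<Sum>l\<in>S. f l * y l) = f i * y i"
proof -
  have "(\<Sum>l\<in>S. f l * y l) = (\<Sum>l\<in>S. if l = i then f i * y i else 0)"
    using assms(3) by (intro sum.cong) auto
  then show ?thesis using assms by (simp add: sum.delta')
qed

lemma YW_g:
  fixes xs :: "nat \<Rightarrow> real"
  assumes mono: "\<And>i. 1 \<le> i \<Longrightarrow> i < N \<Longrightarrow> xs i < xs (Suc i)" and N: "N \<ge> 2"
    and yw: "YW N xs y w t" and j: "j \<in> {1..N-1}"
  shows "mulv (N-1) (Pmat N xs) y j + mulv (N-1) (Qmat N xs) w j = gfun N xs t j"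
proof -
  let ?S = "{1..N-1}"
  have w01: "\<forall>j\<in>?S. w j \<in> {0,1}" and ws: "sum w ?S = 1" and ys: "sum y ?S = t"
    and yb: "\<forall>j\<in>?S. xs j * w j - y j \<le> 0 \<and> xs (Suc j) * w j - y j \<ge> 0"
    using yw unfolding YW_def by auto
  obtain i where i: "i \<in> ?S" "w i = 1"
  proof (rule ccontr)
    assume "\<not> thesis"
    then have "\<forall>j\<in>?S. w j = 0" using w01 that by blast
    then have "sum w ?S = 0" by simp
    then show False using ws by simp
  qed
  have "sum w ?S = w i + sum w (?S - {i})" using i by (simp add: sum.remove)
  then have "sum w (?S - {i}) = 0" using ws i by simp
  moreover have "\<forall>j\<in>?S - {i}. w j \<ge> 0" using w01 by auto
  ultimately have w0: "\<forall>j\<in>?S. j \<noteq> i \<longrightarrow> w j = 0" using sum_nonneg_eq_0_iff[of "?S - {i}" w] by auto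
  have y0: "\<forall>j\<in>?S. j \<noteq> i \<longrightarrow> y j = 0"
  proof (intro ballI impI)
    fix j assume "j \<in> ?S" "j \<noteq> i"
    then have "w j = 0" using w0 by auto
    then show "y j = 0" using yb \<open>j \<in> ?S\<close> by force
  qed
  have "sum y ?S = y i + sum y (?S - {i})" using i by (simp add: sum.remove)
  moreover have "sum y (?S - {i}) = 0" using y0 by (intro sum.neutral) auto
  ultimately have yi: "y i = t" using ys by simp
  have "xs i * w i - y i \<le> 0 \<and> xs (Suc i) * w i - y i \<ge> 0" using yb i(1) by blast
  then have ti: "xs i \<le> t" "t \<le> xs (Suc i)" using i(2) yi by auto
  have P: "mulv (N-1) (Pmat N xs) y j = Pmat N xs j i * t"
    unfolding mulv_def using sum_single[of ?S i y "Pmat N xs j"] i y0 yi by simp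
  have Q: "mulv (N-1) (Qmat N xs) w j = Qmat N xs j i"
    unfolding mulv_def using sum_single[of ?S i w "Qmat N xs j"] i w0 by simp
  have "gfun N xs t j = segf xs i t j"
    using gfun_seg[where N=N and xs=xs, OF mono _ _ ti] i j by auto
  moreover have "Pmat N xs j i * t + Qmat N xs j i = segf xs i t j"
    unfolding Pmat_def Qmat_def segf_def by (auto simp: diff_divide_distrib)
  ultimately show ?thesis using P Q by simp
qed

lemma YW_exists:
  fixes xs :: "nat \<Rightarrow> real"
  assumes mono: "\<And>i. 1 \<le> i \<Longrightarrow> i < N \<Longrightarrow> xs i < xs (Suc i)" and N: "N \<ge> 2"
    and t: "xs 1 \<le> t" "t \<le> xs N"
  shows "\<exists>y w. YW N xs y w t"
proof -
  obtain i where i: "1 \<le> i" "i < N" "xs i \<le> t" "t \<le> xs (Suc i)"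
    using seg_exists[where N=N and xs=xs, OF mono N t] by blast
  define w where "w = (\<lambda>j. if j = i then 1 else (0::real))"
  define y where "y = (\<lambda>j. if j = i then t else (0::real))"
  have "YW N xs y w t" unfolding YW_def w_def y_def using i by (auto simp: sum.delta)
  then show ?thesis by blast
qed

lemma svec_eq:
  fixes xs :: "nat \<Rightarrow> real"
  assumes mono: "\<And>i. 1 \<le> i \<Longrightarrow> i < N \<Longrightarrow> xs i < xs (Suc i)" and N: "N \<ge> 2"
    and yw: "\<forall>k\<in>{1..K}. YW N xs (y k) (w k) (z \<bullet> \<xi> k)" and j: "j \<in> {1..N-1}"
  shows "svec N xs M r1 r2 r3 p h K \<eta> y w j = GG N xs K \<xi> z j + (\<Sum>m=1..M. \<eta> m * h m * DD N xs r1 r2 r3 p m j)"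
proof -
  have "(\<Sum>k=1..K. mulv (N-1) (Pmat N xs) (y k) j + mulv (N-1) (Qmat N xs) (w k) j) = (\<Sum>k=1..K. gfun N xs (z \<bullet> \<xi> k) j)"
    using YW_g[where N=N and xs=xs, OF mono N _ j] yw by (intro sum.cong) auto
  then show ?thesis unfolding svec_def GG_def DD_def by simp
qed



lemma milp_constr:
  fixes xs :: "nat \<Rightarrow> real"
  assumes mono: "\<And>i. 1 \<le> i \<Longrightarrow> i < N \<Longrightarrow> xs i < xs (Suc i)" and N: "N \<ge> 3"
    and yw: "\<forall>k\<in>{1..K}. YW N xs (y k) (w k) (z \<bullet> \<xi> k)"
  shows "(let s = svec N xs M r1 r2 r3 p h K \<eta> y w in \<forall>j\<in>{1..N-2}. s j - s (N-1) + mulvT (N-1) Amat lam j = 0)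
     \<longleftrightarrow> (\<forall>l\<in>{1..N-2}. (GG N xs K \<xi> z l - GG N xs K \<xi> z (N-1)) + (\<Sum>i\<in>{1..N-1}. lam i * Amat i l)
            + (\<Sum>m\<in>{1..M}. \<eta> m * aD N xs r1 r2 r3 p h m l) = 0)"
    and "svec N xs M r1 r2 r3 p h K \<eta> y w (N-1) - dotN (N-1) lam bvec
      = GG N xs K \<xi> z (N-1) - (\<Sum>i\<in>{1..N-1}. lam i * bvec i) - (\<Sum>m\<in>{1..M}. \<eta> m * bD N xs r1 r2 r3 p h m)"
proof -
  have N2: "N \<ge> 2" using N by simp
  have sN: "svec N xs M r1 r2 r3 p h K \<eta> y w (N-1) = GG N xs K \<xi> z (N-1) + (\<Sum>m=1..M. \<eta> m * h m * DD N xs r1 r2 r3 p m (N-1))"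
    using svec_eq[where N=N and xs=xs, OF mono N2 yw] N by auto
  have sl: "svec N xs M r1 r2 r3 p h K \<eta> y w l = GG N xs K \<xi> z l + (\<Sum>m=1..M. \<eta> m * h m * DD N xs r1 r2 r3 p m l)"
    if "l \<in> {1..N-2}" for l
    using svec_eq[where N=N and xs=xs, OF mono N2 yw] that by auto
  have aeq: "(\<Sum>m\<in>{1..M}. \<eta> m * aD N xs r1 r2 r3 p h m l) =
      (\<Sum>m=1..M. \<eta> m * h m * DD N xs r1 r2 r3 p m l) - (\<Sum>m=1..M. \<eta> m * h m * DD N xs r1 r2 r3 p m (N-1))" for l
  proof -
    have "(\<Sum>m\<in>{1..M}. \<eta> m * aD N xs r1 r2 r3 p h m l) =
      (\<Sum>m=1..M. \<eta> m * h m * DD N xs r1 r2 r3 p m l - \<eta> m * h m * DD N xs r1 r2 r3 p m (N-1))"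
      unfolding aD_def by (intro sum.cong) (auto simp: algebra_simps)
    then show ?thesis by (simp add: sum_subtractf)
  qed
  have Teq: "mulvT (N-1) Amat lam l = (\<Sum>i\<in>{1..N-1}. lam i * Amat i l)" for l
    unfolding mulvT_def by (simp add: mult.commute)
  show "(let s = svec N xs M r1 r2 r3 p h K \<eta> y w in \<forall>j\<in>{1..N-2}. s j - s (N-1) + mulvT (N-1) Amat lam j = 0)
     \<longleftrightarrow> (\<forall>l\<in>{1..N-2}. (GG N xs K \<xi> z l - GG N xs K \<xi> z (N-1)) + (\<Sum>i\<in>{1..N-1}. lam i * Amat i l)
            + (\<Sum>m\<in>{1..M}. \<eta> m * aD N xs r1 r2 r3 p h m l) = 0)"
    unfolding Let_def Teq aeq sN using sl by (auto simp: algebra_simps)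
  have beq: "(\<Sum>m\<in>{1..M}. \<eta> m * bD N xs r1 r2 r3 p h m) = - (\<Sum>m=1..M. \<eta> m * h m * DD N xs r1 r2 r3 p m (N-1))"
  proof -
    have "(\<Sum>m\<in>{1..M}. \<eta> m * bD N xs r1 r2 r3 p h m) = (\<Sum>m=1..M. - (\<eta> m * h m * DD N xs r1 r2 r3 p m (N-1)))"
      unfolding bD_def by (intro sum.cong) (auto simp: algebra_simps)
    then show ?thesis by (simp add: sum_negf)
  qed
  show "svec N xs M r1 r2 r3 p h K \<eta> y w (N-1) - dotN (N-1) lam bvec
      = GG N xs K \<xi> z (N-1) - (\<Sum>i\<in>{1..N-1}. lam i * bvec i) - (\<Sum>m\<in>{1..M}. \<eta> m * bD N xs r1 r2 r3 p h m)"
    unfolding sN beq dotN_def by simp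
qed

lemma dual0_exists:
  fixes d :: "nat \<Rightarrow> real"
  assumes N: "N \<ge> 3"
  shows "\<exists>lam0. (\<forall>i\<in>{1..N-1}. lam0 i \<ge> 0) \<and> (\<forall>l\<in>{1..N-2}. d l + (\<Sum>i\<in>{1..N-1}. lam0 i * Amat i l) = 0)"
proof -
  define L where "L = (\<Sum>l\<in>{1..N-2}. \<bar>d l\<bar>)"
  define lam0 where "lam0 = (\<lambda>i. if i = 1 then L else L + d (i - 1))"
  have L0: "L \<ge> 0" unfolding L_def by (simp add: sum_nonneg)
  have pos: "lam0 i \<ge> 0" if "i \<in> {1..N-1}" for i
  proof (cases "i = 1")
    case True then show ?thesis using L0 unfolding lam0_def by simp
  next
    case False
    then have "i - 1 \<in> {1..N-2}" using that by auto
    then have "\<bar>d (i-1)\<bar> \<le> L" unfolding L_def by (intro member_le_sum) auto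
    then show ?thesis using False unfolding lam0_def by auto
  qed
  have eq: "d l + (\<Sum>i\<in>{1..N-1}. lam0 i * Amat i l) = 0" if l: "l \<in> {1..N-2}" for l
  proof -
    have "(\<Sum>i\<in>{1..N-1}. lam0 i * Amat i l) = (\<Sum>i\<in>{1..N-1}. (if i = 1 then L else 0) + (if i = Suc l then - (L + d l) else 0))"
    proof (intro sum.cong refl)
      fix i assume i: "i \<in> {1..N-1}"
      show "lam0 i * Amat i l = (if i = 1 then L else 0) + (if i = Suc l then - (L + d l) else 0)"
      proof (cases "i = 1")
        case True then show ?thesis using l unfolding lam0_def Amat_def by auto
      next
        case False
        then have "l = i - 1 \<longleftrightarrow> i = Suc l" using i by auto
        then show ?thesis using False unfolding lam0_def Amat_def by auto
      qed
    qed
    also have "\<dots> = L - (L + d l)" using l N by (simp add: sum.distrib sum.delta) linarith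
    finally show ?thesis by simp
  qed
  show ?thesis using pos eq by blast
qed



theorem proposition8:
  fixes N M K :: nat and xs :: "nat \<Rightarrow> real"
    and r1 r2 r3 p h :: "nat \<Rightarrow> real"
    and Z :: "'a::euclidean_space set" and \<xi> :: "nat \<Rightarrow> 'a"
  assumes "N \<ge> 3"
    and "\<And>i. 1 \<le> i \<Longrightarrow> i < N \<Longrightarrow> xs i < xs (Suc i)"
    and "M \<ge> 1" and "K \<ge> 1"
    and "\<And>m. m \<in> {1..M} \<Longrightarrow> r1 m \<le> r3 m"
    and "\<And>m. m \<in> {1..M} \<Longrightarrow> r1 m \<in> {xs 1..xs N} \<and> r2 m \<in> {xs 1..xs N} \<and> r3 m \<in> {xs 1..xs N}"
    and "\<And>m. m \<in> {1..M} \<Longrightarrow> p m \<in> {0..1}"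
    and "\<And>m. m \<in> {1..M} \<Longrightarrow> h m \<in> {-1, 1}"
    and "compact Z" and "convex Z"
    and "\<And>z k. z \<in> Z \<Longrightarrow> k \<in> {1..K} \<Longrightarrow> z \<bullet> \<xi> k \<in> {xs 1..xs N}"
  shows "PRO_value N xs M r1 r2 r3 p h Z K \<xi> = MILP_value N xs M r1 r2 r3 p h Z K \<xi>"
proof -
  note mono = assms(2)
  have N: "N \<ge> 3" using assms(1) .
  have N2: "N \<ge> 2" using N by simp
  define V where "V = Vset N xs M r1 r2 r3 p h"
  define MF where "MF = MILP_feasible N xs M r1 r2 r3 p h Z K \<xi>"
  define G where "G = GG N xs K \<xi>"
  define a2 where "a2 = aD N xs r1 r2 r3 p h"
  define b2 where "b2 = bD N xs r1 r2 r3 p h"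
  define F where "F = (\<lambda>z v. (1 / real K) * (\<Sum>k=1..K. dotN (N-1) (Rmap N v) (gfun N xs (z \<bullet> \<xi> k))))"
  define ob where "ob = (\<lambda>q. case q of (z::'a, lam, \<eta>, y, w) \<Rightarrow> svec N xs M r1 r2 r3 p h K \<eta> y w (N-1) - dotN (N-1) lam bvec)"
  have PRO: "PRO_value N xs M r1 r2 r3 p h Z K \<xi> = (SUP z\<in>Z. INF v\<in>V. ereal (F z v))"
    unfolding PRO_value_def V_def F_def ..
  have MILP: "MILP_value N xs M r1 r2 r3 p h Z K \<xi> = (SUP q\<in>MF. ereal (ob q))"
    unfolding MILP_value_def MF_def ob_def by (intro SUP_cong refl) (auto split: prod.split)
  have mf1: "(z, lam, \<eta>, y, w) \<in> MF \<longleftrightarrow>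
     (let s = svec N xs M r1 r2 r3 p h K \<eta> y w in \<forall>j\<in>{1..N-2}. s j - s (N-1) + mulvT (N-1) Amat lam j = 0) \<and>
     (\<forall>k\<in>{1..K}. YW N xs (y k) (w k) (z \<bullet> \<xi> k)) \<and> z \<in> Z \<and> (\<forall>j\<in>{1..N-1}. lam j \<ge> 0) \<and> (\<forall>m\<in>{1..M}. \<eta> m \<ge> 0)"
    for z lam \<eta> y w
    unfolding MF_def MILP_feasible_def YW_def by auto
  have mf_iff: "(z, lam, \<eta>, y, w) \<in> MF \<longleftrightarrow>
     (\<forall>k\<in>{1..K}. YW N xs (y k) (w k) (z \<bullet> \<xi> k)) \<and> z \<in> Z \<and> (\<forall>j\<in>{1..N-1}. lam j \<ge> 0) \<and> (\<forall>m\<in>{1..M}. \<eta> m \<ge> 0) \<and>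
     (\<forall>l\<in>{1..N-2}. (G z l - G z (N-1)) + (\<Sum>i\<in>{1..N-1}. lam i * Amat i l) + (\<Sum>m\<in>{1..M}. \<eta> m * a2 m l) = 0)"
    for z lam \<eta> y w
    unfolding mf1 G_def a2_def using milp_constr(1)[where N=N and xs=xs, OF mono N] by blast
  have ob_eq: "ob (z, lam, \<eta>, y, w) = G z (N-1) - (\<Sum>i\<in>{1..N-1}. lam i * bvec i) - (\<Sum>m\<in>{1..M}. \<eta> m * b2 m)"
    if "\<forall>k\<in>{1..K}. YW N xs (y k) (w k) (z \<bullet> \<xi> k)" for z lam \<eta> y w
    unfolding ob_def G_def b2_def using milp_constr(2)[where N=N and xs=xs, OF mono N that] by simp
  have Veq: "v \<in> V \<longleftrightarrow> (\<forall>i\<in>{1..N-1}. (\<Sum>l\<in>{1..N-2}. Amat i l * v l) \<le> bvec i) \<and>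
      (\<forall>m\<in>{1..M}. (\<Sum>l\<in>{1..N-2}. a2 m l * v l) \<le> b2 m)" for v
    unfolding V_def a2_def b2_def by (rule Vset_iff[OF N])
  have Feq: "F z v = G z (N-1) + (\<Sum>l\<in>{1..N-2}. (G z l - G z (N-1)) * v l)" for z v
    unfolding F_def G_def by (rule F_eq[OF N])
  show ?thesis unfolding PRO MILP
  proof (rule antisym)
    show "(SUP z\<in>Z. INF v\<in>V. ereal (F z v)) \<le> (SUP q\<in>MF. ereal (ob q))"
    proof (rule SUP_least)
      fix z assume z: "z \<in> Z"
      show "(INF v\<in>V. ereal (F z v)) \<le> (SUP q\<in>MF. ereal (ob q))"
      proof (rule ccontr)
        assume "\<not> (INF v\<in>V. ereal (F z v)) \<le> (SUP q\<in>MF. ereal (ob q))"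
        then have "(SUP q\<in>MF. ereal (ob q)) < (INF v\<in>V. ereal (F z v))" by simp
        then obtain t where t1: "(SUP q\<in>MF. ereal (ob q)) < ereal t" and t2: "ereal t < (INF v\<in>V. ereal (F z v))"
          using ereal_dense2 by blast
        have tv: "t < F z v" if "v \<in> V" for v
        proof -
          have "ereal t < ereal (F z v)" using t2 INF_lower[OF that, of "\<lambda>v. ereal (F z v)"] by order
          then show ?thesis by simp
        qed
        obtain lam0 where lam0: "\<forall>i\<in>{1..N-1}. lam0 i \<ge> 0"
          "\<forall>l\<in>{1..N-2}. (G z l - G z (N-1)) + (\<Sum>i\<in>{1..N-1}. lam0 i * Amat i l) = 0"
          using dual0_exists[OF N, of "\<lambda>l. G z l - G z (N-1)"] by blast
        have "\<exists>lam eta. (\<forall>i\<in>{1..N-1}. lam i \<ge> 0) \<and> (\<forall>i\<in>{1..M}. eta i \<ge> 0) \<and>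
           (\<forall>l\<in>{1..N-2}. (G z l - G z (N-1)) + (\<Sum>i\<in>{1..N-1}. lam i * Amat i l) + (\<Sum>i\<in>{1..M}. eta i * a2 i l) = 0) \<and>
           t < G z (N-1) - (\<Sum>i\<in>{1..N-1}. lam i * bvec i) - (\<Sum>i\<in>{1..M}. eta i * b2 i)"
        proof (rule lp_strong[where J="{1..N-2}" and IA="{1..N-1}" and IB="{1..M}" and lamz=lam0 and etaz="\<lambda>_. 0"])
          show "\<forall>l\<in>{1..N-2}. (G z l - G z (N-1)) + (\<Sum>i\<in>{1..N-1}. lam0 i * Amat i l) + (\<Sum>i\<in>{1..M}. 0 * a2 i l) = 0"
            using lam0(2) by simp
          fix v
          assume "\<forall>i\<in>{1..N-1}. (\<Sum>l\<in>{1..N-2}. Amat i l * v l) \<le> bvec i"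
            "\<forall>i\<in>{1..M}. (\<Sum>l\<in>{1..N-2}. a2 i l * v l) \<le> b2 i"
          then have "v \<in> V" using Veq by blast
          then show "t < G z (N-1) + (\<Sum>l\<in>{1..N-2}. (G z l - G z (N-1)) * v l)" using tv Feq by metis
        qed (use lam0 in auto)
        then obtain lam eta where le: "\<forall>i\<in>{1..N-1}. lam i \<ge> 0" "\<forall>i\<in>{1..M}. eta i \<ge> 0"
           "\<forall>l\<in>{1..N-2}. (G z l - G z (N-1)) + (\<Sum>i\<in>{1..N-1}. lam i * Amat i l) + (\<Sum>i\<in>{1..M}. eta i * a2 i l) = 0"
           "t < G z (N-1) - (\<Sum>i\<in>{1..N-1}. lam i * bvec i) - (\<Sum>i\<in>{1..M}. eta i * b2 i)" by blast
        have "\<forall>k\<in>{1..K}. \<exists>yw. YW N xs (fst yw) (snd yw) (z \<bullet> \<xi> k)"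
        proof
          fix k assume k: "k \<in> {1..K}"
          have "xs 1 \<le> z \<bullet> \<xi> k" "z \<bullet> \<xi> k \<le> xs N" using assms(11)[OF z k] by auto
          then obtain y0 w0 where "YW N xs y0 w0 (z \<bullet> \<xi> k)"
            using YW_exists[where N=N and xs=xs, OF mono N2] by blast
          then show "\<exists>yw. YW N xs (fst yw) (snd yw) (z \<bullet> \<xi> k)" by (intro exI[of _ "(y0, w0)"]) simp
        qed
        from bchoice[OF this] obtain f where f: "\<forall>k\<in>{1..K}. YW N xs (fst (f k)) (snd (f k)) (z \<bullet> \<xi> k)"
          by blast
        define y where "y = (\<lambda>k. fst (f k))"
        define w where "w = (\<lambda>k. snd (f k))"
        have yw: "\<forall>k\<in>{1..K}. YW N xs (y k) (w k) (z \<bullet> \<xi> k)" using f unfolding y_def w_def by auto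
        have qin: "(z, lam, eta, y, w) \<in> MF" unfolding mf_iff using yw z le(1,2,3) by simp
        have up: "ereal (ob (z, lam, eta, y, w)) \<le> (SUP q\<in>MF. ereal (ob q))" by (rule SUP_upper[OF qin])
        have "t < ob (z, lam, eta, y, w)" using ob_eq[OF yw] le(4) by simp
        have "ereal (ob (z, lam, eta, y, w)) < ereal t" using up t1 by (rule le_less_trans)
        then show False using \<open>t < ob (z, lam, eta, y, w)\<close> by simp
      qed
    qed
    show "(SUP q\<in>MF. ereal (ob q)) \<le> (SUP z\<in>Z. INF v\<in>V. ereal (F z v))"
    proof (rule SUP_least)
      fix q assume q: "q \<in> MF"
      obtain z lam \<eta> y w where qq: "q = (z, lam, \<eta>, y, w)" by (cases q) auto
      have mf: "(\<forall>k\<in>{1..K}. YW N xs (y k) (w k) (z \<bullet> \<xi> k)) \<and> z \<in> Z \<and> (\<forall>j\<in>{1..N-1}. lam j \<ge> 0) \<and> (\<forall>m\<in>{1..M}. \<eta> m \<ge> 0) \<and>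
        (\<forall>l\<in>{1..N-2}. (G z l - G z (N-1)) + (\<Sum>i\<in>{1..N-1}. lam i * Amat i l) + (\<Sum>m\<in>{1..M}. \<eta> m * a2 m l) = 0)"
        using q mf_iff unfolding qq by blast
      have "ereal (ob q) \<le> (INF v\<in>V. ereal (F z v))"
      proof (rule INF_greatest)
        fix v assume "v \<in> V"
        then have vv: "\<forall>i\<in>{1..N-1}. (\<Sum>l\<in>{1..N-2}. Amat i l * v l) \<le> bvec i"
            "\<forall>m\<in>{1..M}. (\<Sum>l\<in>{1..N-2}. a2 m l * v l) \<le> b2 m" using Veq by auto
        have "G z (N-1) - (\<Sum>i\<in>{1..N-1}. lam i * bvec i) - (\<Sum>m\<in>{1..M}. \<eta> m * b2 m)
            \<le> G z (N-1) + (\<Sum>l\<in>{1..N-2}. (G z l - G z (N-1)) * v l)"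
          by (rule lp_weak[where J="{1..N-2}" and IA="{1..N-1}" and IB="{1..M}"]) (use mf vv in auto)
        then show "ereal (ob q) \<le> ereal (F z v)" unfolding qq ob_eq[OF mf[THEN conjunct1]] Feq by simp
      qed
      also have "\<dots> \<le> (SUP z\<in>Z. INF v\<in>V. ereal (F z v))" using mf by (intro SUP_upper) auto
      finally show "ereal (ob q) \<le> (SUP z\<in>Z. INF v\<in>V. ereal (F z v))" .
    qed
  qed
qed


end
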